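(* Let $n\geq 5$ and let $G=C^2_n$. Then $G$ does not contain $W_6$ as a minor if and only if $5\leq n\leq 8$.
   Context: All graphs are finite and simple. For $n\geq 5$, $C^2_n$ is the graph obtained from a cycle $C_n$ by adding an edge between every pair of vertices at distance two on the cycle (it is $4$-connected). $W_6$ is the wheel obtained by joining a single new vertex to all vertices of a cycle of length $6$. A minor is obtained by a sequence of edge deletions and edge contractions (parallel edges arising from contractions are reduced to single edges). *)

theory Defs
  imports Main
begin

type_synonym graph = "nat set \<times> nat set set"

definition verts :: "graph \<Rightarrow> nat set" where "verts G = fst G"
definition edges :: "graph \<Rightarrow> nat set set" where "edges G = snd G"

definition simple_graph :: "graph \<Rightarrow> bool" where
  "simple_graph G \<longleftrightarrow> finite (verts G) \<and>
     (\<forall>e\<in>edges G. e \<subseteq> verts G \<and> card e = 2)"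

definition del_edge :: "graph \<Rightarrow> nat set \<Rightarrow> graph" where
  "del_edge G e = (verts G, edges G - {e})"

text \<open>Contracting the edge {u,v}: v is merged into u; parallel edges are
automatically identified (edges form a set) and the contracted edge disappears.\<close>
definition contract_edge :: "graph \<Rightarrow> nat \<Rightarrow> nat \<Rightarrow> graph" where
  "contract_edge G u v =
     (verts G - {v},
      {(\<lambda>x. if x = v then u else x) ` e | e. e \<in> edges G \<and> e \<noteq> {u, v}})"

inductive minor_step :: "graph \<Rightarrow> graph \<Rightarrow> bool" where
  del: "e \<in> edges G \<Longrightarrow> minor_step G (del_edge G e)"
| contr: "{u, v} \<in> edges G \<Longrightarrow> u \<noteq> v \<Longrightarrow> minor_step G (contract_edge G u v)"

definition graph_iso :: "graph \<Rightarrow> graph \<Rightarrow> bool" where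
  "graph_iso G H \<longleftrightarrow> (\<exists>f. bij_betw f (verts G) (verts H) \<and>
     (\<forall>x\<in>verts G. \<forall>y\<in>verts G. ({x, y} \<in> edges G \<longleftrightarrow> {f x, f y} \<in> edges H)))"

definition is_minor :: "graph \<Rightarrow> graph \<Rightarrow> bool" where
  "is_minor H G \<longleftrightarrow> (\<exists>G'. minor_step\<^sup>*\<^sup>* G G' \<and> graph_iso G' H)"

definition C2 :: "nat \<Rightarrow> graph" where
  "C2 n = ({0..<n},
     {{i, (i + 1) mod n} | i. i < n} \<union> {{i, (i + 2) mod n} | i. i < n})"

definition W6 :: graph where
  "W6 = ({0..6}, {{i, (i + 1) mod 6} | i::nat. i < 6} \<union> {{i, 6} | i::nat. i < 6})"

end

theory Submission
  imports Defs
begin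


definition wfg :: "graph \<Rightarrow> bool" where "wfg G \<longleftrightarrow> (\<forall>e\<in>edges G. e \<subseteq> verts G)"

lemma del_simps[simp]: "verts (del_edge G e) = verts G" "edges (del_edge G e) = edges G - {e}"
  by (auto simp: del_edge_def verts_def edges_def)

lemma contr_simps[simp]: "verts (contract_edge G u v) = verts G - {v}"
  "edges (contract_edge G u v) = (\<lambda>e. (\<lambda>x. if x = v then u else x) ` e) ` {e\<in>edges G. e \<noteq> {u,v}}"
  by (auto simp: contract_edge_def verts_def edges_def)

lemma mstep_wf: "minor_step G H \<Longrightarrow> wfg G \<Longrightarrow> wfg H"
  by (induction rule: minor_step.induct) (auto simp: wfg_def)

lemma C2_simps[simp]: "verts (C2 n) = {0..<n}"
  "edges (C2 n) = {{i, (i + 1) mod n} | i. i < n} \<union> {{i, (i + 2) mod n} | i. i < n}"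
  by (auto simp: C2_def verts_def edges_def)

lemma C2_wf: "wfg (C2 n)"
  by (auto simp: wfg_def)

definition S :: "nat \<Rightarrow> nat \<Rightarrow> nat set" where
  "S n x = set [(x+1) mod n, (x+2) mod n, (x + (n-1)) mod n, (x + (n-2)) mod n]"

lemma card_S: "card (S n x) \<le> 4"
  unfolding S_def using card_length[of "[(x+1) mod n, (x+2) mod n, (x + (n-1)) mod n, (x + (n-2)) mod n]"] by simp

lemma mod_back: "(i::nat) < n \<Longrightarrow> c \<le> n \<Longrightarrow> x = (i + c) mod n \<Longrightarrow> i = (x + (n - c)) mod n"
proof -
  assume a: "i < n" "c \<le> n" "x = (i + c) mod n"
  have "(x + (n - c)) mod n = (i + c + (n - c)) mod n" unfolding a(3) by (rule mod_add_left_eq)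
  also have "\<dots> = (i + n) mod n" using a by simp
  also have "\<dots> = i" using a by simp
  finally show ?thesis by simp
qed

lemma nbrs_C2: "x < n \<Longrightarrow> 2 \<le> n \<Longrightarrow> {y. {x,y} \<in> edges (C2 n)} \<subseteq> S n x"
proof
  fix y assume xn: "x < n" "2 \<le> n" and y: "y \<in> {y. {x,y} \<in> edges (C2 n)}"
  then have "(\<exists>i<n. {x,y} = {i,(i+1) mod n}) \<or> (\<exists>i<n. {x,y}={i,(i+2) mod n})" by auto
  then obtain i c where i: "i < n" "c = 1 \<or> c = 2" "{x,y} = {i, (i+c) mod n}" by blast
  from i(3) have "(x = i \<and> y = (i+c) mod n) \<or> (x = (i+c) mod n \<and> y = i)" by (auto simp: doubleton_eq_iff)
  then show "y \<in> S n x"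
  proof
    assume "x = i \<and> y = (i+c) mod n" then show ?thesis using i by (auto simp: S_def)
  next
    assume h: "x = (i+c) mod n \<and> y = i"
    then have "y = (x + (n - c)) mod n" using mod_back[of i n c x] i xn by auto
    then show ?thesis using i by (auto simp: S_def)
  qed
qed

lemma contr_nbrs:
  assumes "\<forall>e\<in>edges G. \<exists>a b. e = {a,b}" "h \<noteq> v"
  shows "{y. {h,y} \<in> edges (contract_edge G u v)} \<subseteq>
     (\<lambda>x. if x = v then u else x) ` ({y. {h,y} \<in> edges G} \<union> (if h = u then {y. {v,y} \<in> edges G} else {}))"
proof
  fix y assume "y \<in> {y. {h,y} \<in> edges (contract_edge G u v)}"
  then obtain e where e: "e \<in> edges G" "{h,y} = (\<lambda>x. if x = v then u else x) ` e"
    by auto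
  then obtain a b where "e = {a,b}" using assms(1) by blast
  then have ab: "{a,b} \<in> edges G" "{h,y} = (\<lambda>x. if x = v then u else x) ` {a,b}" using e by auto
  then have "{h,y} = {(if a = v then u else a), (if b = v then u else b)}" by (simp only: image_insert image_empty)
  then have "(h = (if a = v then u else a) \<and> y = (if b = v then u else b)) \<or>
     (h = (if b = v then u else b) \<and> y = (if a = v then u else a))" by (auto simp: doubleton_eq_iff)
  then show "y \<in> (\<lambda>x. if x = v then u else x) ` ({y. {h,y} \<in> edges G} \<union> (if h = u then {y. {v,y} \<in> edges G} else {}))"
  proof
    assume h: "h = (if a = v then u else a) \<and> y = (if b = v then u else b)"
    show ?thesis
    proof (cases "a = v")
      case True then show ?thesis using h ab by (auto intro!: image_eqI[where x=b])
    next
      case False then show ?thesis using h ab by (auto intro!: image_eqI[where x=b])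
    qed
  next
    assume h: "h = (if b = v then u else b) \<and> y = (if a = v then u else a)"
    have ba: "{b,a} \<in> edges G" using ab by (simp add: insert_commute)
    show ?thesis
    proof (cases "b = v")
      case True then show ?thesis using h ba by (auto intro!: image_eqI[where x=a])
    next
      case False then show ?thesis using h ba by (auto intro!: image_eqI[where x=a])
    qed
  qed
qed

lemma W6_simps: "verts W6 = {0..6}"
  "edges W6 = {{i, (i + 1) mod 6} | i::nat. i < 6} \<union> {{i, 6} | i::nat. i < 6}"
  by (auto simp: W6_def verts_def edges_def)

lemma iso_W6_hub:
  assumes "graph_iso G W6"
  shows "card (verts G) = 7 \<and> (\<exists>h\<in>verts G. \<exists>Y. Y \<subseteq> {y. {h,y} \<in> edges G} - {h} \<and> card Y = 6)"
proof -
  obtain f where f: "bij_betw f (verts G) {0..6}"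
    "\<forall>x\<in>verts G. \<forall>y\<in>verts G. ({x, y} \<in> edges G \<longleftrightarrow> {f x, f y} \<in> edges W6)"
    using assms by (auto simp: graph_iso_def W6_simps)
  have c7: "card (verts G) = 7" using bij_betw_same_card[OF f(1)] by simp
  define g where "g = inv_into (verts G) f"
  have gb: "bij_betw g {0..6} (verts G)" unfolding g_def using f(1) by (rule bij_betw_inv_into)
  have fg: "\<And>i. i \<in> {0..6} \<Longrightarrow> f (g i) = i" unfolding g_def using f(1)
    by (meson bij_betw_inv_into_right)
  define h where "h = g 6"
  have hV: "h \<in> verts G" unfolding h_def using gb by (auto simp: bij_betw_def)
  define Y where "Y = g ` {0..<6}"
  have "inj_on g {0..<6}" using gb by (auto simp: bij_betw_def intro: inj_on_subset)
  then have cY: "card Y = 6" unfolding Y_def by (simp add: card_image)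
  have "Y \<subseteq> {y. {h,y} \<in> edges G} - {h}"
  proof
    fix y assume "y \<in> Y"
    then obtain i where i: "i < 6" "y = g i" unfolding Y_def by auto
    have yV: "y \<in> verts G" using gb i by (auto simp: bij_betw_def)
    have fy: "f y = i" using fg i by auto
    have fh: "f h = 6" using fg h_def by auto
    have "{f h, f y} \<in> edges W6" using fy fh i by (auto simp: W6_simps insert_commute)
    then have "{h,y} \<in> edges G" using f(2) hV yV by blast
    moreover have "y \<noteq> h" using fy fh i by auto
    ultimately show "y \<in> {y. {h,y} \<in> edges G} - {h}" by auto
  qed
  then show ?thesis using c7 hV cY by blast
qed

lemma not_iso_W6:
  assumes "\<forall>h\<in>verts G. \<exists>B. finite B \<and> card B \<le> 5 \<and> {y. {h,y}\<in>edges G} - {h} \<subseteq> B"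
  shows "\<not> graph_iso G W6"
proof
  assume "graph_iso G W6"
  then obtain h Y where h: "h \<in> verts G" "Y \<subseteq> {y. {h,y} \<in> edges G} - {h}" "card Y = 6"
    using iso_W6_hub by blast
  obtain B where B: "finite B" "card B \<le> 5" "{y. {h,y}\<in>edges G} - {h} \<subseteq> B" using assms h by blast
  have "card Y \<le> card B" using B h by (meson card_mono order_trans)
  then show False using h B by simp
qed

lemma minor_verts: "minor_step\<^sup>*\<^sup>* G H \<Longrightarrow> verts H \<subseteq> verts G"
  by (induction rule: rtranclp_induct) (auto elim!: minor_step.cases)

lemma small_case:
  assumes "n \<le> 6" shows "\<not> is_minor W6 (C2 n)"
proof
  assume "is_minor W6 (C2 n)"
  then obtain G where G: "minor_step\<^sup>*\<^sup>* (C2 n) G" "graph_iso G W6" by (auto simp: is_minor_def)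
  have "verts G \<subseteq> {0..<n}" using minor_verts[OF G(1)] by simp
  then have "card (verts G) \<le> n" by (metis card_atLeastLessThan card_mono finite_atLeastLessThan minus_nat.diff_0)
  then show False using iso_W6_hub[OF G(2)] assms by simp
qed

definition Inv7 :: "graph \<Rightarrow> bool" where
  "Inv7 G \<longleftrightarrow> wfg G \<and> verts G \<subseteq> {0..<7} \<and> (verts G = {0..<7} \<longrightarrow> edges G \<subseteq> edges (C2 7))"

lemma inv7: "minor_step\<^sup>*\<^sup>* (C2 7) G \<Longrightarrow> Inv7 G"
proof (induction rule: rtranclp_induct)
  case base then show ?case using C2_wf[of 7] by (auto simp: Inv7_def)
next
  case (step G H)
  then have wH: "wfg H" using mstep_wf by (auto simp: Inv7_def)
  from step(2) show ?case
  proof cases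
    case (del e) then show ?thesis using step wH by (auto simp: Inv7_def)
  next
    case (contr u v)
    have "v \<in> verts G" using contr step(3) by (auto simp: Inv7_def wfg_def)
    then show ?thesis using contr step(3) wH by (auto simp: Inv7_def)
  qed
qed

lemma S_nbr: "x < n \<Longrightarrow> 2 \<le> n \<Longrightarrow> E \<subseteq> edges (C2 n) \<Longrightarrow> {y. {x,y}\<in>E} - {x} \<subseteq> S n x"
  using nbrs_C2[of x n] by blast

lemma case7: "\<not> is_minor W6 (C2 7)"
proof
  assume "is_minor W6 (C2 7)"
  then obtain G where G: "minor_step\<^sup>*\<^sup>* (C2 7) G" "graph_iso G W6" by (auto simp: is_minor_def)
  have I: "Inv7 G" using inv7[OF G(1)] .
  have "card (verts G) = 7" using iso_W6_hub[OF G(2)] by simp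
  then have V: "verts G = {0..<7}" using I unfolding Inv7_def
    by (metis card_atLeastLessThan card_subset_eq finite_atLeastLessThan minus_nat.diff_0)
  then have E: "edges G \<subseteq> edges (C2 7)" using I by (auto simp: Inv7_def simp del: C2_simps)
  have "\<forall>h\<in>verts G. \<exists>B. finite B \<and> card B \<le> 5 \<and> {y. {h,y}\<in>edges G} - {h} \<subseteq> B"
  proof
    fix h assume "h \<in> verts G"
    then have "{y. {h,y}\<in>edges G} - {h} \<subseteq> S 7 h" using S_nbr[OF _ _ E, of h] V by auto
    moreover have "card (S 7 h) \<le> 5" using card_S[of 7 h] by simp
    moreover have "finite (S 7 h)" by (simp add: S_def)
    ultimately show "\<exists>B. finite B \<and> card B \<le> 5 \<and> {y. {h,y}\<in>edges G} - {h} \<subseteq> B"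
      by blast
  qed
  then show False using not_iso_W6 G(2) by blast
qed

lemma contr_mono: "edges G \<subseteq> edges G' \<Longrightarrow> edges (contract_edge G u v) \<subseteq> edges (contract_edge G' u v)"
  by auto

definition Inv8 :: "graph \<Rightarrow> bool" where
  "Inv8 G \<longleftrightarrow> wfg G \<and> verts G \<subseteq> {0..<8} \<and> (verts G = {0..<8} \<longrightarrow> edges G \<subseteq> edges (C2 8)) \<and>
     (card (verts G) = 7 \<longrightarrow> (\<exists>u v. {u,v} \<in> edges (C2 8) \<and> v \<notin> verts G \<and>
         edges G \<subseteq> edges (contract_edge (C2 8) u v)))"

definition L8 :: "nat \<Rightarrow> nat list" where "L8 x = [(x+1) mod 8, (x+2) mod 8, (x + 7) mod 8, (x + 6) mod 8]"

lemma L8_all: "list_all (\<lambda>u. list_all (\<lambda>v. length (remdups (filter (\<lambda>x. x \<noteq> u \<and> x \<noteq> v) (L8 u @ L8 v))) \<le> 5) (L8 u)) [0..<8]"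
  unfolding L8_def by code_simp

lemma S8_L8: "S 8 x = set (L8 x)" by (simp add: S_def L8_def)

lemma enum8: "u < 8 \<Longrightarrow> v \<in> S 8 u \<Longrightarrow> card ((S 8 u \<union> S 8 v) - {u,v}) \<le> 5"
proof -
  assume u: "u < 8" and v: "v \<in> S 8 u"
  have eq: "(S 8 u \<union> S 8 v) - {u,v} = set (filter (\<lambda>x. x \<noteq> u \<and> x \<noteq> v) (L8 u @ L8 v))"
    unfolding S8_L8 by auto
  then have e: "card ((S 8 u \<union> S 8 v) - {u,v}) = length (remdups (filter (\<lambda>x. x \<noteq> u \<and> x \<noteq> v) (L8 u @ L8 v)))"
    by (simp only: eq card_set)
  have "u \<in> set [0..<8]" using u by simp
  then have "list_all (\<lambda>v. length (remdups (filter (\<lambda>x. x \<noteq> u \<and> x \<noteq> v) (L8 u @ L8 v))) \<le> 5) (L8 u)"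
    using L8_all by (simp add: list_all_iff)
  then have "length (remdups (filter (\<lambda>x. x \<noteq> u \<and> x \<noteq> v) (L8 u @ L8 v))) \<le> 5"
    using v unfolding S8_L8 list_all_iff by blast
  then show ?thesis by (simp only: e)
qed

lemma I8mono: "Inv8 G \<Longrightarrow> verts H = verts G \<Longrightarrow> edges H \<subseteq> edges G \<Longrightarrow> wfg H \<Longrightarrow> Inv8 H"
proof -
  assume a: "Inv8 G" "verts H = verts G" "edges H \<subseteq> edges G" "wfg H"
  have "verts H = {0..<8} \<Longrightarrow> edges H \<subseteq> edges (C2 8)" using a unfolding Inv8_def by (metis order_trans)
  moreover have "card (verts H) = 7 \<Longrightarrow> (\<exists>u v. {u,v} \<in> edges (C2 8) \<and> v \<notin> verts H \<and>
         edges H \<subseteq> edges (contract_edge (C2 8) u v))"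
  proof -
    assume "card (verts H) = 7"
    then obtain u v where "{u,v} \<in> edges (C2 8)" "v \<notin> verts G"
         "edges G \<subseteq> edges (contract_edge (C2 8) u v)" using a unfolding Inv8_def by auto
    then show ?thesis using a by (metis order_trans)
  qed
  ultimately show ?thesis using a unfolding Inv8_def by simp
qed

lemma inv8: "minor_step\<^sup>*\<^sup>* (C2 8) G \<Longrightarrow> Inv8 G"
proof (induction rule: rtranclp_induct)
  case base then show ?case using C2_wf[of 8] by (auto simp: Inv8_def)
next
  case (step G H)
  then have wH: "wfg H" using mstep_wf by (auto simp: Inv8_def)
  from step(2) show ?case
  proof cases
    case (del e) then show ?thesis using step wH I8mono[of G H] by auto
  next
    case (contr u v)
    have vG: "v \<in> verts G" using contr step(3) by (auto simp: Inv8_def wfg_def)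
    have sub: "verts G \<subseteq> {0..<8}" using step(3) by (auto simp: Inv8_def)
    have fin: "finite (verts G)" using sub finite_subset by blast
    have ne: "verts H \<noteq> {0..<8}" using contr vG sub by auto
    have "card (verts H) = 7 \<Longrightarrow> (\<exists>u v. {u,v} \<in> edges (C2 8) \<and> v \<notin> verts H \<and>
         edges H \<subseteq> edges (contract_edge (C2 8) u v))"
    proof -
      assume c: "card (verts H) = 7"
      have "card (verts G) = 8" using c contr vG fin by (simp add: card_Diff_singleton)
      then have "verts G = {0..<8}" using sub
        by (metis card_atLeastLessThan card_subset_eq finite_atLeastLessThan minus_nat.diff_0)
      then have E: "edges G \<subseteq> edges (C2 8)" using step(3) by (auto simp: Inv8_def simp del: C2_simps)
      then have "{u,v} \<in> edges (C2 8)" using contr by blast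
      moreover have "edges H \<subseteq> edges (contract_edge (C2 8) u v)" using contr contr_mono[OF E] by simp
      moreover have "v \<notin> verts H" using contr by simp
      ultimately show ?thesis by blast
    qed
    then show ?thesis using wH ne contr sub unfolding Inv8_def by auto
  qed
qed

lemma Inv8_D1: "Inv8 G \<Longrightarrow> verts G \<subseteq> {0..<8}" unfolding Inv8_def by blast
lemma Inv8_D2: "Inv8 G \<Longrightarrow> card (verts G) = 7 \<Longrightarrow> (\<exists>u v. {u,v} \<in> edges (C2 8) \<and> v \<notin> verts G \<and>
         edges G \<subseteq> edges (contract_edge (C2 8) u v))" unfolding Inv8_def by blast

lemma case8: "\<not> is_minor W6 (C2 8)"
proof
  assume "is_minor W6 (C2 8)"
  then obtain G where G: "minor_step\<^sup>*\<^sup>* (C2 8) G" "graph_iso G W6" by (auto simp: is_minor_def)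
  have I: "Inv8 G" using inv8[OF G(1)] .
  have "card (verts G) = 7" using iso_W6_hub[OF G(2)] by simp
  then obtain u v where uv: "{u,v} \<in> edges (C2 8)" "v \<notin> verts G"
      "edges G \<subseteq> edges (contract_edge (C2 8) u v)" using Inv8_D2[OF I] by blast
  have "{u,v} \<subseteq> verts (C2 8)" using uv(1) C2_wf[of 8] unfolding wfg_def by blast
  then have u8: "u < 8" and v8: "v < 8" by auto
  have two: "(2::nat) \<le> 8" by simp
  have vS: "v \<in> S 8 u" using nbrs_C2[OF u8 two] uv(1) by blast
  define f where "f = (\<lambda>x::nat. if x = v then u else x)"
  have dbl: "\<forall>e\<in>edges (C2 8). \<exists>a b. e = {a,b}" by auto
  have "\<forall>h\<in>verts G. \<exists>B. finite B \<and> card B \<le> 5 \<and> {y. {h,y}\<in>edges G} - {h} \<subseteq> B"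
  proof
    fix h assume hV: "h \<in> verts G"
    have hv: "h \<noteq> v" using hV uv by auto
    have h8: "h < 8" using hV Inv8_D1[OF I] by auto
    define Nb where "Nb = (\<lambda>x. {y. {x,y} \<in> edges (C2 8)})"
    have NbS: "Nb x \<subseteq> S 8 x" if "x < 8" for x unfolding Nb_def using nbrs_C2[OF that two] .
    have A: "{y. {h,y}\<in>edges G} \<subseteq> {y. {h,y} \<in> edges (contract_edge (C2 8) u v)}" using uv(3) by blast
    have N0: "{y. {h,y}\<in>edges G} \<subseteq> f ` (Nb h \<union> (if h = u then Nb v else {}))"
      using subset_trans[OF A contr_nbrs[OF dbl hv, of u]] unfolding f_def Nb_def .
    show "\<exists>B. finite B \<and> card B \<le> 5 \<and> {y. {h,y}\<in>edges G} - {h} \<subseteq> B"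
    proof (cases "h = u")
      case False
      have "{y. {h,y}\<in>edges G} \<subseteq> f ` Nb h" using N0 False by simp
      also have "\<dots> \<subseteq> f ` S 8 h" using NbS[OF h8] by (rule image_mono)
      finally have "{y. {h,y}\<in>edges G} - {h} \<subseteq> f ` S 8 h" by blast
      moreover have "card (f ` S 8 h) \<le> 5" using card_image_le[of "S 8 h" f] card_S[of 8 h]
        by (simp add: S_def)
      moreover have "finite (f ` S 8 h)" by (simp add: S_def)
      ultimately show ?thesis by blast
    next
      case True
      have N1: "{y. {h,y}\<in>edges G} \<subseteq> f ` (Nb u \<union> Nb v)" using N0 True by simp
      have "{y. {h,y}\<in>edges G} - {h} \<subseteq> (S 8 u \<union> S 8 v) - {u,v}"
      proof
        fix y assume y: "y \<in> {y. {h,y}\<in>edges G} - {h}"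
        then have "y \<in> f ` (Nb u \<union> Nb v)" "y \<noteq> u" using N1 True by blast+
        then obtain z where z: "z \<in> Nb u \<union> Nb v" "y = f z" "y \<noteq> u" by blast
        have zz: "z \<noteq> v" "z \<noteq> u" using z unfolding f_def by auto
        then have "y = z" using z unfolding f_def by auto
        moreover have "z \<in> S 8 u \<union> S 8 v" using z NbS[OF u8] NbS[OF v8] by blast
        ultimately show "y \<in> (S 8 u \<union> S 8 v) - {u,v}" using zz by auto
      qed
      moreover have "card ((S 8 u \<union> S 8 v) - {u,v}) \<le> 5" using enum8 u8 vS by blast
      moreover have "finite ((S 8 u \<union> S 8 v) - {u,v})" by (simp add: S_def)
      ultimately show ?thesis by blast
    qed
  qed
  then show False using not_iso_W6 G(2) by blast
qed



lemma del_many: "finite F \<Longrightarrow> minor_step\<^sup>*\<^sup>* G (verts G, edges G - F)"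
proof (induction F rule: finite_induct)
  case empty
  have "G = (verts G, edges G)" by (simp add: verts_def edges_def)
  then show ?case by simp
next
  case (insert x F)
  show ?case
  proof (cases "x \<in> edges G - F")
    case True
    have "minor_step (verts G, edges G - F) (del_edge (verts G, edges G - F) x)"
      using True by (intro minor_step.del) (simp add: edges_def)
    moreover have "del_edge (verts G, edges G - F) x = (verts G, edges G - insert x F)"
      by (auto simp: del_edge_def verts_def edges_def)
    ultimately show ?thesis using insert(3) by (metis rtranclp.rtrancl_into_rtrancl)
  next
    case False
    then have "edges G - insert x F = edges G - F" by auto
    then show ?thesis using insert(3) by simp
  qed
qed

definition E0 :: "nat \<Rightarrow> nat set set" where
  "E0 m = {{0,2},{2,4},{0,1},{2,3},{4,5},{4,6},{0,m},{1,3},{3,5},{5,6},{m,1}}"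

definition PP :: "nat \<Rightarrow> nat set set" where
  "PP k = {{j, Suc j} | j. 6 \<le> j \<and> j < k}"

definition Q :: "nat \<Rightarrow> nat \<Rightarrow> graph" where
  "Q k m = ({0..k} \<union> {m}, E0 m \<union> PP k \<union> {{k,m},{k,0}})"

lemma Q_simps: "verts (Q k m) = {0..k} \<union> {m}" "edges (Q k m) = E0 m \<union> PP k \<union> {{k,m},{k,0}}"
  by (auto simp: Q_def verts_def edges_def)

lemma c1: "i < n \<Longrightarrow> {i, (i+1) mod n} \<in> edges (C2 n)" by auto
lemma c2: "i < n \<Longrightarrow> {i, (i+2) mod n} \<in> edges (C2 n)" by auto

lemma Q_sub:
  assumes m: "8 \<le> m"
  shows "edges (Q (m-1) m) \<subseteq> edges (C2 (Suc m))"
proof -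
  let ?E = "edges (C2 (Suc m))"
  have a: "{i, Suc i} \<in> ?E" if "i < m" for i
    using c1[of i "Suc m"] that by simp
  have b: "{i, i+2} \<in> ?E" if "i + 1 < m" for i
    using c2[of i "Suc m"] that by simp
  have "{m, (m+1) mod Suc m} \<in> ?E" using c1[of m "Suc m"] by simp
  then have m0: "{0, m} \<in> ?E" by (simp add: insert_commute)
  have "(m + 2) mod Suc m = 1"
    using mod_add_self2[of 1 "Suc m"] m by simp
  then have m1: "{m, 1} \<in> ?E" using c2[of m "Suc m"] by simp
  have "(m - 1 + 2) mod Suc m = 0" using m by simp
  then have "{m-1, 0} \<in> ?E" using c2[of "m-1" "Suc m"] m by simp
  moreover have "{m-1, m} \<in> ?E" using a[of "m-1"] m by simp
  moreover have "E0 m \<subseteq> ?E" unfolding E0_def using a[of 0] a[of 2] a[of 4] a[of 5] b[of 0] b[of 2] b[of 4]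
      b[of 1] b[of 3] m0 m1 m by (auto simp: numeral_eq_Suc)
  moreover have "PP (m-1) \<subseteq> ?E" unfolding PP_def using a by auto
  ultimately show ?thesis by (auto simp: Q_simps)
qed

lemma fix_img: "v \<notin> e \<Longrightarrow> (\<lambda>x. if x = v then u else x) ` e = e"
  by (auto simp: image_iff)

lemma Q_contr:
  assumes k: "7 \<le> k" "Suc k < m"
  shows "contract_edge (Q (Suc k) m) k (Suc k) = Q k m"
proof -
  let ?f = "\<lambda>e. (\<lambda>x. if x = Suc k then k else x) ` e"
  have V: "verts (contract_edge (Q (Suc k) m) k (Suc k)) = verts (Q k m)"
    using k by (auto simp: Q_simps)
  have s1: "{e \<in> edges (Q (Suc k) m). e \<noteq> {k, Suc k}} = E0 m \<union> PP k \<union> {{Suc k, m}, {Suc k, 0}}"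
  proof -
    have pp: "PP (Suc k) = insert {k, Suc k} (PP k)" using k by (auto simp: PP_def less_Suc_eq)
    have n1: "{k,Suc k} \<notin> E0 m" using k by (simp add: E0_def doubleton_eq_iff)
    have n2: "{k,Suc k} \<notin> PP k" by (auto simp: PP_def doubleton_eq_iff)
    have n3: "{k,Suc k} \<noteq> {Suc k, m}" "{k, Suc k} \<noteq> {Suc k, 0}" using k by (auto simp: doubleton_eq_iff)
    show ?thesis using n1 n2 n3 unfolding Q_simps pp by blast
  qed
  have i1: "?f ` E0 m = E0 m"
  proof -
    have "\<forall>e\<in>E0 m. Suc k \<notin> e" using k by (auto simp: E0_def)
    then show ?thesis using fix_img by (metis (no_types, lifting) image_cong image_ident)
  qed
  have i2: "?f ` PP k = PP k"
  proof -
    have "\<forall>e\<in>PP k. Suc k \<notin> e" using k by (auto simp: PP_def)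
    then show ?thesis using fix_img by (metis (no_types, lifting) image_cong image_ident)
  qed
  have i3: "?f ` {{Suc k, m}, {Suc k, 0}} = {{k,m},{k,0}}" using k by auto
  have E: "edges (contract_edge (Q (Suc k) m) k (Suc k)) = edges (Q k m)"
  proof -
    have "edges (contract_edge (Q (Suc k) m) k (Suc k)) = ?f ` {e \<in> edges (Q (Suc k) m). e \<noteq> {k, Suc k}}"
      by (rule contr_simps(2))
    also have "\<dots> = ?f ` (E0 m \<union> PP k \<union> {{Suc k, m}, {Suc k, 0}})" unfolding s1 ..
    also have "\<dots> = E0 m \<union> PP k \<union> {{k,m},{k,0}}" unfolding image_Un i1 i2 i3 ..
    also have "\<dots> = edges (Q k m)" by (simp only: Q_simps)
    finally show ?thesis .
  qed
  show ?thesis using V E by (metis prod.collapse verts_def edges_def)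
qed



lemma six: "{F i |i. i < (6::nat)} = {F 0, F 1, F 2, F 3, F 4, F 5}"
proof -
  have "i < (6::nat) \<longleftrightarrow> i = 0 \<or> i = 1 \<or> i = 2 \<or> i = 3 \<or> i = 4 \<or> i = 5" for i by arith
  then show ?thesis by auto
qed

lemma W6_mem: "{a,b} \<in> edges W6 \<longleftrightarrow> (a < 6 \<and> b = (a+1) mod 6) \<or> (b < 6 \<and> a = (b+1) mod 6) \<or> (a < 6 \<and> b = 6) \<or> (b < 6 \<and> a = 6)"
  unfolding W6_simps by (auto simp: doubleton_eq_iff)

lemma filt: "{e \<in> insert a A. P e} = (if P a then insert a {e\<in>A. P e} else {e\<in>A. P e})" "{e \<in> {}. P e} = {}"
  by auto

lemma PP7: "PP 7 = {{6,7}}"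
proof -
  have "6 \<le> j \<and> j < (7::nat) \<longleftrightarrow> j = 6" for j by arith
  then show ?thesis unfolding PP_def by auto
qed

definition mapv :: "nat \<Rightarrow> nat \<Rightarrow> nat \<Rightarrow> nat" where "mapv u v x = (if x = v then u else x)"

lemma contr_mapv: "edges (contract_edge G u v) = image (mapv u v) ` {e \<in> edges G. e \<noteq> {u,v}}"
  unfolding contr_simps mapv_def ..

lemma mapv1: "mapv u v v = u" and mapv2: "x \<noteq> v \<Longrightarrow> mapv u v x = x"
  by (auto simp: mapv_def)

definition Q7L :: "nat \<Rightarrow> nat set list" where
  "Q7L m = [{0,2},{2,4},{0,1},{2,3},{4,5},{4,6},{0,m},{1,3},{3,5},{5,6},{m,1},{6,7},{7,m},{7,0}]"

lemma Q7E: "edges (Q 7 m) = set (Q7L m)"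
  by (simp add: Q_simps E0_def PP7 insert_commute Q7L_def)

lemma K1E: "8 \<le> m \<Longrightarrow> edges (contract_edge (Q 7 m) 0 2) =
  set [{0,4},{0,1},{0,3},{4,5},{4,6},{0,m},{1,3},{3,5},{5,6},{m,1},{6,7},{7,m},{7,0}]"
  unfolding contr_mapv Q7E set_filter[symmetric] set_map[symmetric]
  by (simp add: Q7L_def doubleton_eq_iff mapv1 mapv2)


lemma K2E: "8 \<le> m \<Longrightarrow> edges (contract_edge (contract_edge (Q 7 m) 0 2) 0 4) =
  set [{0,1},{0,3},{0,5},{0,6},{0,m},{1,3},{3,5},{5,6},{m,1},{6,7},{7,m},{7,0}]"
  unfolding contr_mapv[of "contract_edge (Q 7 m) 0 2"]
  apply (simp only: K1E)
  unfolding set_filter[symmetric] set_map[symmetric]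
  by (simp add: doubleton_eq_iff mapv1 mapv2)

lemma K2V: "8 \<le> m \<Longrightarrow> verts (contract_edge (contract_edge (Q 7 m) 0 2) 0 4) = {0,1,3,5,6,7,m}"
  by (auto simp: Q_simps)

definition gW :: "nat \<Rightarrow> nat \<Rightarrow> nat" where
  "gW m x = (if x = 0 then 6 else if x = 1 then 0 else if x = 3 then 1 else if x = 5 then 2
     else if x = 6 then 3 else if x = 7 then 4 else 5)"

lemma zero6: "{0..6::nat} = {0,1,2,3,4,5,6}"
proof -
  have "x \<le> (6::nat) \<longleftrightarrow> x = 0 \<or> x = 1 \<or> x = 2 \<or> x = 3 \<or> x = 4 \<or> x = 5 \<or> x = 6" for x by arith
  then show ?thesis by auto
qed

lemma K2_iso: "8 \<le> m \<Longrightarrow> graph_iso (contract_edge (contract_edge (Q 7 m) 0 2) 0 4) W6"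
proof -
  assume m: "8 \<le> m"
  have bij: "bij_betw (gW m) {0,1,3,5,6,7,m} {0..6}"
    unfolding bij_betw_def inj_on_def zero6 using m by (auto simp: gW_def)
  have ed: "\<forall>x\<in>{0,1,3,5,6,7,m}. \<forall>y\<in>{0,1,3,5,6,7,m}.
     ({x, y} \<in> set [{0,1},{0,3},{0,5},{0,6},{0,m},{1,3},{3,5},{5,6},{m,1},{6,7},{7,m},{7,0}]
       \<longleftrightarrow> {gW m x, gW m y} \<in> edges W6)"
    unfolding W6_mem using m by (simp add: gW_def doubleton_eq_iff)
  show ?thesis unfolding graph_iso_def K2V[OF m] K2E[OF m] W6_simps(1) using bij ed by blast
qed

lemma path: "7 \<le> k \<Longrightarrow> k < m \<Longrightarrow> minor_step\<^sup>*\<^sup>* (Q k m) (Q 7 m)"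
proof (induction k)
  case 0 then show ?case by simp
next
  case (Suc k)
  show ?case
  proof (cases "k = 6")
    case True then show ?thesis by simp
  next
    case False
    then have k7: "7 \<le> k" using Suc by simp
    have "{k, Suc k} \<in> edges (Q (Suc k) m)" using k7 by (auto simp: Q_simps PP_def)
    from minor_step.contr[OF this] have "minor_step (Q (Suc k) m) (Q k m)"
      using Q_contr[OF k7 Suc(3)] by simp
    moreover have "minor_step\<^sup>*\<^sup>* (Q k m) (Q 7 m)" using Suc k7 by simp
    ultimately show ?thesis by (rule converse_rtranclp_into_rtranclp)
  qed
qed

lemma graph_eq: "verts G = verts H \<Longrightarrow> edges G = edges H \<Longrightarrow> G = H"
  by (simp add: verts_def edges_def prod_eq_iff)

lemma big: assumes "9 \<le> n" shows "is_minor W6 (C2 n)"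
proof -
  define m where "m = n - 1"
  have m: "8 \<le> m" and n: "n = Suc m" using assms by (auto simp: m_def)
  define F where "F = edges (C2 n) - edges (Q (m-1) m)"
  have "finite (edges (C2 n))" by (simp add: finite_image_set)
  then have "finite F" unfolding F_def by simp
  then have s1: "minor_step\<^sup>*\<^sup>* (C2 n) (verts (C2 n), edges (C2 n) - F)" by (rule del_many)
  have sub: "edges (Q (m-1) m) \<subseteq> edges (C2 n)" using Q_sub[OF m] n by simp
  have "(verts (C2 n), edges (C2 n) - F) = Q (m-1) m"
  proof (rule graph_eq)
    show "verts (verts (C2 n), edges (C2 n) - F) = verts (Q (m - 1) m)"
      unfolding verts_def[of "(_, _)"] fst_conv C2_simps(1) Q_simps using m n by auto
    show "edges (verts (C2 n), edges (C2 n) - F) = edges (Q (m - 1) m)"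
      using sub unfolding F_def by (auto simp: edges_def[of "(_, _)"])
  qed
  with s1 have s1': "minor_step\<^sup>*\<^sup>* (C2 n) (Q (m-1) m)" by simp
  have s2: "minor_step\<^sup>*\<^sup>* (Q (m-1) m) (Q 7 m)" using path[of "m-1" m] m by simp
  have "{0,2} \<in> edges (Q 7 m)" by (simp add: Q7E Q7L_def)
  then have s3: "minor_step (Q 7 m) (contract_edge (Q 7 m) 0 2)" by (rule minor_step.contr) simp
  have "{0,4} \<in> edges (contract_edge (Q 7 m) 0 2)" using K1E[OF m] by simp
  then have s4: "minor_step (contract_edge (Q 7 m) 0 2) (contract_edge (contract_edge (Q 7 m) 0 2) 0 4)"
    by (rule minor_step.contr) simp
  have "minor_step\<^sup>*\<^sup>* (C2 n) (contract_edge (contract_edge (Q 7 m) 0 2) 0 4)"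
    using s1' s2 s3 s4 by (meson rtranclp.rtrancl_into_rtrancl rtranclp_trans)
  then show ?thesis unfolding is_minor_def using K2_iso[OF m] by blast
qed

theorem lemma3p4:
  fixes n :: nat
  assumes "n \<ge> 5"
  shows "\<not> is_minor W6 (C2 n) \<longleftrightarrow> 5 \<le> n \<and> n \<le> 8"
proof (cases "n \<le> 8")
  case True
  have "\<not> is_minor W6 (C2 n)"
  proof -
    have "n \<le> 6 \<or> n = 7 \<or> n = 8" using True by arith
    then show ?thesis using small_case case7 case8 by blast
  qed
  then show ?thesis using True assms by simp
next
  case False
  then show ?thesis using big[of n] by simp
qed

end
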